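(* Let $\Omega_n=\dfrac{\pi^{n/2}}{\Gamma\left(\frac n2+1\right)}$ for $n\in\mathbb{N}_0$, and \[ c(n)=1+\frac1{4n}+\frac1{32n^2}-\frac5{128n^3}-\frac{21}{2048n^4}+\frac{399}{8192n^5},\qquad d(n)=c(n)+\frac{869}{65536n^6}. \] Then $\sqrt{\frac{n}{2\pi}}\,c(n)<\frac{\Omega_{n-1}}{\Omega_n}$ for every integer $n\ge12$, and $\frac{\Omega_{n-1}}{\Omega_n}<\sqrt{\frac n{2\pi}}\,d(n)$ for every integer $n\ge1$.
   Context: $\Omega_n$ is the volume of the unit ball in $\mathbb{R}^n$ ($\Omega_0=1$); $\Gamma$ is Euler's gamma function. *)

theory Defs
  imports "HOL-Analysis.Analysis"
begin

definition Omega :: "nat \<Rightarrow> real" where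
  "Omega n = pi powr (real n / 2) / Gamma (real n / 2 + 1)"

definition cc :: "nat \<Rightarrow> real" where
  "cc n = 1 + 1 / (4 * real n) + 1 / (32 * real n ^ 2) - 5 / (128 * real n ^ 3)
          - 21 / (2048 * real n ^ 4) + 399 / (8192 * real n ^ 5)"

definition dd :: "nat \<Rightarrow> real" where
  "dd n = cc n + 869 / (65536 * real n ^ 6)"

end

theory Submission
  imports Defs "HOL-Real_Asymp.Real_Asymp"
begin

definition pe :: "real \<Rightarrow> real" where
  "pe n = 65536*n^7 + 16384*n^6 + 2048*n^5 - 2560*n^4 - 672*n^3 + 3192*n^2 + 869*n - 10000"
definition pd :: "real \<Rightarrow> real" where
  "pd n = 65536*n^6 + 16384*n^5 + 2048*n^4 - 2560*n^3 - 672*n^2 + 3192*n + 869"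

lemma pe_id: "(n+1)^2 * pe(n+2)^2 * n^13 - (n+2)^15 * pe n ^2 = (let t = n - 1 in 16525188536255713 + t * (193494846462295723 + t * (1039185745681530877 + t * (3442110963662590703 + t * (7917402044394254917 + t * (13458184840295248783 + t * (17542039897876411417 + t * (17946033475144751859 + t * (14624053984964241499 + t * (9576566716274360945 + t * (5060462800380732007 + t * (2157722261152275581 + t * (739263510415049031 + t * (201715493993315509 + t * (43194804590330307 + t * (7097813526337889 + t * (865805720822008 + t * (74840493769440 + t * (4365263201792 + t * (181209786368 + t * (7901560832 + t * (309657600))))))))))))))))))))))"
  unfolding pe_def Let_def by algebra
lemma pd_id: "(n+2)^13 * pd n ^2 - (n+1)^2 * pd(n+2)^2 * n^11 = (let t = n - 1 in 706928947587143 + t * (7244631489179205 + t * (34567803912625673 + t * (101735660365461499 + t * (206540515509371502 + t * (306710038772144178 + t * (344840637865024178 + t * (299791227515571382 + t * (204027139793996499 + t * (109335754638663897 + t * (46147363444372917 + t * (15258363330118367 + t * (3905388459855368 + t * (757879895024928 + t * (107739528452608 + t * (10577989081088 + t * (640760659968 + t * (18040422400))))))))))))))))))"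
  unfolding pd_def Let_def by algebra

lemma pe_chain: assumes "(n::real) \<ge> 1" shows "(n+2)^15 * pe n ^2 < (n+1)^2 * pe(n+2)^2 * n^13"
proof -
  define t where "t = n - 1"
  have t: "t \<ge> 0" using assms t_def by simp
  have "0 < (let t = n - 1 in 16525188536255713 + t * (193494846462295723 + t * (1039185745681530877 + t * (3442110963662590703 + t * (7917402044394254917 + t * (13458184840295248783 + t * (17542039897876411417 + t * (17946033475144751859 + t * (14624053984964241499 + t * (9576566716274360945 + t * (5060462800380732007 + t * (2157722261152275581 + t * (739263510415049031 + t * (201715493993315509 + t * (43194804590330307 + t * (7097813526337889 + t * (865805720822008 + t * (74840493769440 + t * (4365263201792 + t * (181209786368 + t * (7901560832 + t * (309657600))))))))))))))))))))))"
    unfolding Let_def t_def[symmetric] using t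
    by (intro add_pos_nonneg mult_nonneg_nonneg add_nonneg_nonneg) auto
  then show ?thesis using pe_id[of n] by linarith
qed

lemma pd_chain: assumes "(n::real) \<ge> 1" shows "(n+1)^2 * pd(n+2)^2 * n^11 < (n+2)^13 * pd n ^2"
proof -
  define t where "t = n - 1"
  have t: "t \<ge> 0" using assms t_def by simp
  have "0 < (let t = n - 1 in 706928947587143 + t * (7244631489179205 + t * (34567803912625673 + t * (101735660365461499 + t * (206540515509371502 + t * (306710038772144178 + t * (344840637865024178 + t * (299791227515571382 + t * (204027139793996499 + t * (109335754638663897 + t * (46147363444372917 + t * (15258363330118367 + t * (3905388459855368 + t * (757879895024928 + t * (107739528452608 + t * (10577989081088 + t * (640760659968 + t * (18040422400))))))))))))))))))"
    unfolding Let_def t_def[symmetric] using t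
    by (intro add_pos_nonneg mult_nonneg_nonneg add_nonneg_nonneg) auto
  then show ?thesis using pd_id[of n] by linarith
qed


lemma Gamma_p1: "(z::real) > 0 \<Longrightarrow> Gamma (z + 1) = z * Gamma z"
  by (rule Gamma_plus1) (auto elim!: nonpos_Ints_cases)

lemma gamma_mid:
  fixes a b :: real assumes "a > 0" "b > 0"
  shows "Gamma ((a+b)/2)^2 \<le> Gamma a * Gamma b"
proof -
  have "(ln \<circ> Gamma) ((1 - 1/2) *\<^sub>R a + (1/2) *\<^sub>R b) \<le> (1 - 1/2) * (ln \<circ> Gamma) a + (1/2) * (ln \<circ> Gamma) b"
    by (rule convex_onD[OF log_convex_Gamma_real]) (use assms in auto)
  moreover have "(1 - 1/2) *\<^sub>R a + (1/2) *\<^sub>R b = (a+b)/2" by simp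
  ultimately have h: "ln (Gamma ((a+b)/2)) \<le> (1 - 1/2) * ln (Gamma a) + (1/2) * ln (Gamma b)"
    by (metis comp_apply)
  have pm: "Gamma ((a+b)/2) > 0" using assms by simp
  have "ln (Gamma ((a+b)/2)^2) = 2 * ln (Gamma ((a+b)/2))" using pm by (simp add: ln_realpow)
  also have "\<dots> \<le> ln (Gamma a) + ln (Gamma b)" using h by simp
  also have "\<dots> = ln (Gamma a * Gamma b)" by (rule ln_mult_pos[symmetric]) (use assms in auto)
  finally have L: "ln (Gamma ((a+b)/2)^2) \<le> ln (Gamma a * Gamma b)" .
  have p2: "0 < Gamma ((a+b)/2)^2" using pm by simp
  have p3: "0 < Gamma a * Gamma b" using assms by simp
  show ?thesis using L ln_le_cancel_iff[OF p2 p3] by blast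
qed

definition G :: "real \<Rightarrow> real" where
  "G x = Gamma (x+1)^2 / (x * Gamma (x + 1/2)^2)"

lemma alg1: "(x::real) > 0 \<Longrightarrow> A > 0 \<Longrightarrow> B > 0 \<Longrightarrow>
   ((x+1)*A)^2/((x+1)*((x+1/2)*B)^2) = A^2/(x*B^2) * (x*(x+1)/(x+1/2)^2)"
  by (simp add: divide_simps) (simp add: algebra_simps power2_eq_square)

lemma G_step: assumes "x > 0" shows "G (x+1) = G x * (x*(x+1)/(x+1/2)^2)"
proof -
  have a: "Gamma (x+1+1) = (x+1) * Gamma (x+1)" using assms by (intro Gamma_p1) simp
  have e: "x+1+1/2 = (x+1/2)+1" by simp
  have b: "Gamma (x+1+1/2) = (x+1/2) * Gamma (x+1/2)"
    unfolding e by (rule Gamma_p1) (use assms in simp)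
  have p1: "Gamma (x+1) > 0" "Gamma (x+1/2) > 0" using assms by auto
  show ?thesis unfolding G_def a b using alg1[OF assms p1] .
qed

lemma alg2: "(x::real) > 0 \<Longrightarrow> A > 0 \<Longrightarrow> B > 0 \<Longrightarrow> x * B^2 \<le> A^2 \<Longrightarrow> 1 \<le> A^2/(x*B^2)"
  by (simp add: field_simps)
lemma alg3: "(x::real) > 0 \<Longrightarrow> A > 0 \<Longrightarrow> B > 0 \<Longrightarrow> A^2 \<le> (x+1/2) * B^2 \<Longrightarrow> A^2/(x*B^2) \<le> (x+1/2)/x"
  by (simp add: field_simps)

lemma G_bounds: assumes "x > 0" shows "1 \<le> G x" "G x \<le> (x + 1/2) / x"
proof -
  have p1: "Gamma (x+1) > 0" "Gamma (x+1/2) > 0" "Gamma x > 0" using assms by auto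
  have g1: "Gamma (x+1) = x * Gamma x" using Gamma_p1 assms by blast
  have eq1: "(x + (x+1))/2 = x + 1/2" by simp
  have m1: "Gamma (x+1/2)^2 \<le> Gamma x * Gamma (x+1)"
  proof -
    have "Gamma ((x + (x+1))/2)^2 \<le> Gamma x * Gamma (x+1)" by (rule gamma_mid) (use assms in auto)
    then show ?thesis by (simp only: eq1)
  qed
  have "x * Gamma (x+1/2)^2 \<le> x * (Gamma x * Gamma (x+1))"
    using mult_left_mono[OF m1, of x] assms by simp
  also have "\<dots> = Gamma (x+1)^2" using g1 by (simp add: power2_eq_square)
  finally show "1 \<le> G x" unfolding G_def using alg2 p1 assms by blast
  have g2: "Gamma (x+1/2+1) = (x+1/2) * Gamma (x+1/2)" by (rule Gamma_p1) (use assms in simp)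
  have eq2: "((x+1/2) + (x+1/2+1))/2 = x + 1" by simp
  have m2: "Gamma (x+1)^2 \<le> Gamma (x+1/2) * Gamma (x+1/2+1)"
  proof -
    have "Gamma (((x+1/2) + (x+1/2+1))/2)^2 \<le> Gamma (x+1/2) * Gamma (x+1/2+1)"
      by (rule gamma_mid) (use assms in auto)
    then show ?thesis by (simp only: eq2)
  qed
  have "Gamma (x+1)^2 \<le> (x+1/2) * Gamma (x+1/2)^2" using m2 g2 by (simp add: power2_eq_square mult_ac)
  then show "G x \<le> (x + 1/2) / x" unfolding G_def using alg3 p1 assms by blast
qed

lemma pe_pos: assumes "(n::real) \<ge> 1" shows "pe n > 0"
proof -
  define t where "t = n - 1"
  have t: "t \<ge> 0" using assms t_def by simp
  have "pe n = 74797 + t * (562293 + t * (1628312 + t * (2631008 + t * (2547200 + t * (1476608 + t * (475136 + t * (65536)))))))"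
    unfolding pe_def t_def by algebra
  also have "\<dots> > 0" using t by (intro add_pos_nonneg mult_nonneg_nonneg add_nonneg_nonneg) auto
  finally show ?thesis .
qed

lemma pd_pos: assumes "(n::real) \<ge> 1" shows "pd n > 0"
proof -
  define t where "t = n - 1"
  have t: "t \<ge> 0" using assms t_def by simp
  have "pd n = 84797 + t * (477496 + t * (1150816 + t * (1480192 + t * (1067008 + t * (409600 + t * (65536))))))"
    unfolding pd_def t_def by algebra
  also have "\<dots> > 0" using t by (intro add_pos_nonneg mult_nonneg_nonneg add_nonneg_nonneg) auto
  finally show ?thesis .
qed

lemma conv_e: fixes y X Y :: real assumes "y > 0" and h: "(y+2)^15 * X^2 < (y+1)^2*Y^2*y^13"
  shows "(X/(65536*y^7))^2 * (y*(y+2)/(y+1)^2) < (Y/(65536*(y+2)^7))^2"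
proof -
  define K where "K = 65536^2 * y^13 * (y+1)^2 * (y+2)^14"
  have K: "K > 0" using assms K_def by simp
  have "(y+2)^15 * X^2 / K < (y+1)^2*Y^2*y^13 / K" using h K by (rule divide_strict_right_mono)
  moreover have "(y+2)^15 * X^2 / K = (X/(65536*y^7))^2 * (y*(y+2)/(y+1)^2)"
    unfolding K_def using assms by (simp add: divide_simps; algebra)
  moreover have "(y+1)^2*Y^2*y^13 / K = (Y/(65536*(y+2)^7))^2"
    unfolding K_def using assms by (simp add: divide_simps; algebra)
  ultimately show ?thesis by simp
qed

lemma conv_d: fixes y X Y :: real assumes "y > 0" and h: "(y+1)^2*Y^2*y^11 < (y+2)^13 * X^2"
  shows "(Y/(65536*(y+2)^6))^2 < (X/(65536*y^6))^2 * (y*(y+2)/(y+1)^2)"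
proof -
  define K where "K = 65536^2 * y^11 * (y+1)^2 * (y+2)^12"
  have K: "K > 0" using assms K_def by simp
  have "(y+1)^2*Y^2*y^11 / K < (y+2)^13 * X^2 / K" using h K by (rule divide_strict_right_mono)
  moreover have "(y+2)^13 * X^2 / K = (X/(65536*y^6))^2 * (y*(y+2)/(y+1)^2)"
    unfolding K_def using assms by (simp add: divide_simps; algebra)
  moreover have "(y+1)^2*Y^2*y^11 / K = (Y/(65536*(y+2)^6))^2"
    unfolding K_def using assms by (simp add: divide_simps; algebra)
  ultimately show ?thesis by simp
qed

lemma lim_e: "(\<lambda>n. pe (real n) / (65536 * real n ^ 7)) \<longlonglongrightarrow> 1"
  unfolding pe_def by real_asymp
lemma lim_d: "(\<lambda>n. pd (real n) / (65536 * real n ^ 6)) \<longlonglongrightarrow> 1"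
  unfolding pd_def by real_asymp
lemma lim_h: "(\<lambda>n. (real n + 1) / real n) \<longlonglongrightarrow> 1"
  by real_asymp

lemma chain_lower:
  fixes a f :: "nat \<Rightarrow> real"
  assumes n: "n \<ge> 1"
   and step: "\<And>m. m \<ge> 1 \<Longrightarrow> a (m+2) = a m * (real m * (real m + 2) / (real m + 1)^2)"
   and bnd: "\<And>m. m \<ge> 1 \<Longrightarrow> 1 \<le> a m"
   and fpos: "\<And>m. m \<ge> 1 \<Longrightarrow> f m > 0"
   and ch: "\<And>m. m \<ge> 1 \<Longrightarrow> f m ^2 * (real m * (real m + 2) / (real m + 1)^2) < f (m+2) ^2"
   and lim: "f \<longlonglongrightarrow> 1"
  shows "f n ^ 2 < a n"
proof -
  define P where "P k = a (n + 2*k) / f (n+2*k)^2" for k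
  have dec: "P (Suc k) < P k" for k
  proof -
    define m where "m = n + 2*k"
    have m: "m \<ge> 1" using n m_def by simp
    have nm: "n + 2*Suc k = m + 2" using m_def by simp
    define q where "q = real m * (real m + 2) / (real m + 1)^2"
    have q: "q > 0" using m q_def by simp
    have am: "a m > 0" using bnd[OF m] by simp
    have fm: "f m > 0" "f (m+2) > 0" using fpos m by auto
    have chq: "f m ^2 * q < f (m+2) ^2" using ch[OF m] unfolding q_def by simp
    have "P (Suc k) = a m * q / f (m+2)^2" unfolding P_def nm step[OF m] q_def ..
    also have "\<dots> < a m * q / (f m^2 * q)"
      by (rule divide_strict_left_mono) (use chq am q fm in \<open>auto intro: mult_pos_pos\<close>)
    also have "\<dots> = P k" unfolding P_def m_def[symmetric] using q by simp
    finally show ?thesis .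
  qed
  have Pge: "P k \<ge> 1 / f (n+2*k)^2" for k
    unfolding P_def using bnd[of "n+2*k"] fpos[of "n+2*k"] n by (simp add: divide_right_mono)
  have decs: "decseq P" using dec by (simp add: decseq_Suc_iff less_imp_le)
  have lim2: "(\<lambda>k. 1 / f (n+2*k)^2) \<longlonglongrightarrow> 1"
  proof -
    have sm: "strict_mono (\<lambda>k. n + 2*k)" by (simp add: strict_mono_def)
    have "(f \<circ> (\<lambda>k. n+2*k)) \<longlonglongrightarrow> 1" by (rule LIMSEQ_subseq_LIMSEQ[OF lim sm])
    hence "(\<lambda>k. f (n+2*k)) \<longlonglongrightarrow> 1" by (simp add: o_def)
    hence "(\<lambda>k. 1 / f (n+2*k)^2) \<longlonglongrightarrow> 1 / 1^2" by (intro tendsto_intros) auto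
    thus ?thesis by simp
  qed
  have "1 \<le> P 1"
  proof (rule tendsto_le[OF _ tendsto_const lim2])
    show "sequentially \<noteq> bot" by simp
    show "eventually (\<lambda>k. 1 / f (n+2*k)^2 \<le> P 1) sequentially"
      using eventually_ge_at_top[of 1]
    proof eventually_elim
      case (elim k)
      then have "P k \<le> P 1" using decs by (simp add: decseqD)
      then show ?case using Pge[of k] by linarith
    qed
  qed
  then have "1 < P 0" using dec[of 0] by simp
  thus ?thesis unfolding P_def using fpos[OF n] by (simp add: field_simps)
qed

lemma chain_upper:
  fixes a f :: "nat \<Rightarrow> real"
  assumes n: "n \<ge> 1"
   and step: "\<And>m. m \<ge> 1 \<Longrightarrow> a (m+2) = a m * (real m * (real m + 2) / (real m + 1)^2)"
   and bnd: "\<And>m. m \<ge> 1 \<Longrightarrow> 1 \<le> a m"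
   and bnd2: "\<And>m. m \<ge> 1 \<Longrightarrow> a m \<le> (real m + 1) / real m"
   and fpos: "\<And>m. m \<ge> 1 \<Longrightarrow> f m > 0"
   and ch: "\<And>m. m \<ge> 1 \<Longrightarrow> f (m+2) ^2 < f m ^2 * (real m * (real m + 2) / (real m + 1)^2)"
   and lim: "f \<longlonglongrightarrow> 1"
  shows "a n < f n ^ 2"
proof -
  define P where "P k = a (n + 2*k) / f (n+2*k)^2" for k
  have inc: "P k < P (Suc k)" for k
  proof -
    define m where "m = n + 2*k"
    have m: "m \<ge> 1" using n m_def by simp
    have nm: "n + 2*Suc k = m + 2" using m_def by simp
    define q where "q = real m * (real m + 2) / (real m + 1)^2"
    have q: "q > 0" using m q_def by simp
    have am: "a m > 0" using bnd[OF m] by simp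
    have fm: "f m > 0" "f (m+2) > 0" using fpos m by auto
    have chq: "f (m+2) ^2 < f m ^2 * q" using ch[OF m] unfolding q_def by simp
    have "P k = a m * q / (f m^2 * q)" unfolding P_def m_def[symmetric] using q by simp
    also have "\<dots> < a m * q / f (m+2)^2"
      by (rule divide_strict_left_mono) (use chq am q fm in \<open>auto intro: mult_pos_pos\<close>)
    also have "\<dots> = P (Suc k)" unfolding P_def nm step[OF m] q_def ..
    finally show ?thesis .
  qed
  have Ple: "P k \<le> ((real (n+2*k) + 1) / real (n+2*k)) / f (n+2*k)^2" for k
    unfolding P_def by (rule divide_right_mono) (use bnd2[of "n+2*k"] n in auto)
  have incs: "incseq P" using inc by (simp add: incseq_Suc_iff less_imp_le)
  have lim2: "(\<lambda>k. ((real (n+2*k) + 1) / real (n+2*k)) / f (n+2*k)^2) \<longlonglongrightarrow> 1"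
  proof -
    have sm: "strict_mono (\<lambda>k. n + 2*k)" by (simp add: strict_mono_def)
    have "(f \<circ> (\<lambda>k. n+2*k)) \<longlonglongrightarrow> 1" by (rule LIMSEQ_subseq_LIMSEQ[OF lim sm])
    hence l1: "(\<lambda>k. f (n+2*k)) \<longlonglongrightarrow> 1" by (simp add: o_def)
    have "((\<lambda>m. (real m + 1) / real m) \<circ> (\<lambda>k. n+2*k)) \<longlonglongrightarrow> 1" by (rule LIMSEQ_subseq_LIMSEQ[OF lim_h sm])
    hence l2: "(\<lambda>k. (real (n+2*k) + 1) / real (n+2*k)) \<longlonglongrightarrow> 1" by (simp add: o_def)
    have "(\<lambda>k. ((real (n+2*k) + 1) / real (n+2*k)) / f (n+2*k)^2) \<longlonglongrightarrow> 1 / 1^2"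
      using l1 l2 by (intro tendsto_intros) auto
    thus ?thesis by simp
  qed
  have "P 1 \<le> 1"
  proof (rule tendsto_le[OF _ lim2 tendsto_const])
    show "sequentially \<noteq> bot" by simp
    show "eventually (\<lambda>k. P 1 \<le> ((real (n+2*k) + 1) / real (n+2*k)) / f (n+2*k)^2) sequentially"
      using eventually_ge_at_top[of 1]
    proof eventually_elim
      case (elim k)
      then have "P 1 \<le> P k" using incs by (simp add: incseqD)
      then show ?case using Ple[of k] by linarith
    qed
  qed
  then have "P 0 < 1" using inc[of 0] by simp
  thus ?thesis unfolding P_def using fpos[OF n] by (simp add: field_simps)
qed

lemma Omega_ratio: assumes "n \<ge> 1"
  shows "Omega (n-1)/Omega n = Gamma (real n/2+1)/(sqrt pi * Gamma (real n/2 + 1/2))"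
proof -
  have r: "real (n-1) = real n - 1" using assms by simp
  have e1: "real (n-1)/2 + 1 = real n/2 + 1/2" unfolding r by (simp add: field_simps)
  have e2: "pi powr (real (n-1)/2) = pi powr (real n/2) / sqrt pi"
    unfolding r using powr_diff[of pi "real n/2" "1/2"] by (simp add: powr_half_sqrt diff_divide_distrib)
  have pos: "pi powr (real n/2) > 0" "Gamma (real n/2+1) > 0" "Gamma (real n/2+1/2) > 0" "sqrt pi > 0"
    by auto
  show ?thesis unfolding Omega_def e1 e2 using pos by (simp add: field_simps)
qed

lemma alg4: "(n::real) > 0 \<Longrightarrow> B > 0 \<Longrightarrow> (A/(sqrt pi * B))^2 = n/(2*pi) * (A^2/((n/2)*B^2))"
  by (simp add: field_simps power_mult_distrib)

definition aa :: "nat \<Rightarrow> real" where "aa n = G (real n / 2)"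

lemma r_sq: assumes "n \<ge> 1" shows "(Omega (n-1)/Omega n)^2 = real n/(2*pi) * aa n"
  unfolding Omega_ratio[OF assms] aa_def G_def
  by (rule alg4) (use assms in auto)

lemma r_pos: assumes "n \<ge> 1" shows "Omega (n-1)/Omega n > 0"
  unfolding Omega_ratio[OF assms] by auto

lemma aa_step: assumes "m \<ge> 1" shows "aa (m+2) = aa m * (real m * (real m + 2) / (real m + 1)^2)"
proof -
  have e: "real (m+2)/2 = real m/2 + 1" by simp
  have "aa (m+2) = aa m * (real m/2 * (real m/2 + 1) / (real m/2 + 1/2)^2)"
    unfolding aa_def e by (rule G_step) (use assms in simp)
  also have "real m/2 * (real m/2 + 1) / (real m/2 + 1/2)^2 = real m * (real m + 2) / (real m + 1)^2"
    by (simp add: divide_simps; algebra)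
  finally show ?thesis .
qed

lemma aa_ge1: "m \<ge> 1 \<Longrightarrow> 1 \<le> aa m"
  unfolding aa_def by (rule G_bounds) simp

lemma aa_le: assumes "m \<ge> 1" shows "aa m \<le> (real m + 1) / real m"
proof -
  have "aa m \<le> (real m/2 + 1/2) / (real m/2)" unfolding aa_def by (rule G_bounds) (use assms in simp)
  also have "\<dots> = (real m + 1) / real m" using assms by (simp add: divide_simps; algebra)
  finally show ?thesis .
qed

definition ee :: "nat \<Rightarrow> real" where "ee n = pe (real n) / (65536 * real n ^ 7)"
definition ff :: "nat \<Rightarrow> real" where "ff n = pd (real n) / (65536 * real n ^ 6)"

lemma ee_pos: "m \<ge> 1 \<Longrightarrow> ee m > 0"
  unfolding ee_def using pe_pos[of "real m"] by simp
lemma ff_pos: "m \<ge> 1 \<Longrightarrow> ff m > 0"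
  unfolding ff_def using pd_pos[of "real m"] by simp

lemma ee_ch: assumes "m \<ge> 1"
  shows "ee m ^2 * (real m * (real m + 2) / (real m + 1)^2) < ee (m+2) ^2"
  unfolding ee_def of_nat_add of_nat_numeral
  by (intro conv_e pe_chain) (use assms in auto)

lemma ff_ch: assumes "m \<ge> 1"
  shows "ff (m+2) ^2 < ff m ^2 * (real m * (real m + 2) / (real m + 1)^2)"
  unfolding ff_def of_nat_add of_nat_numeral
  by (intro conv_d pd_chain) (use assms in auto)

lemma ee_lim: "ee \<longlonglongrightarrow> 1" unfolding ee_def[abs_def] by (rule lim_e)
lemma ff_lim: "ff \<longlonglongrightarrow> 1" unfolding ff_def[abs_def] by (rule lim_d)

lemma dd_ff: assumes "n \<ge> 1" shows "dd n = ff n"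
  unfolding dd_def cc_def ff_def pd_def using assms by (simp add: divide_simps; algebra)

lemma cc_ee: assumes "n \<ge> 12" shows "cc n < ee n"
proof -
  have eq: "ee n - cc n = (869 * real n - 10000) / (65536 * real n ^ 7)"
    unfolding ee_def cc_def pe_def using assms by (simp add: divide_simps; algebra)
  have "real n \<ge> 12" using assms by simp
  hence "(869 * real n - 10000) / (65536 * real n ^ 7) > 0" by simp
  thus ?thesis using eq by linarith
qed

theorem theorem9:
  shows "(\<forall>n::nat. n \<ge> 12 \<longrightarrow>
            sqrt (real n / (2 * pi)) * cc n < Omega (n - 1) / Omega n)
       \<and> (\<forall>n::nat. n \<ge> 1 \<longrightarrow>
            Omega (n - 1) / Omega n < sqrt (real n / (2 * pi)) * dd n)"
proof (intro conjI allI impI)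
  fix n :: nat assume n12: "12 \<le> n"
  hence n: "n \<ge> 1" by simp
  have low: "ee n ^2 < aa n" by (rule chain_lower[OF n aa_step aa_ge1 ee_pos ee_ch ee_lim])
  have x: "real n / (2*pi) > 0" using n by simp
  have rr: "Omega (n-1)/Omega n = sqrt (real n/(2*pi) * aa n)"
    using r_sq[OF n] r_pos[OF n] by (metis abs_of_pos real_sqrt_abs)
  show "sqrt (real n / (2 * pi)) * cc n < Omega (n - 1) / Omega n"
  proof (cases "cc n \<le> 0")
    case True
    then have "sqrt (real n / (2 * pi)) * cc n \<le> 0" by (simp add: mult_nonneg_nonpos)
    then show ?thesis using r_pos[OF n] by linarith
  next
    case False
    then have c0: "cc n > 0" by simp
    have "cc n ^2 < ee n ^2" using cc_ee[OF n12] c0 by (intro power_strict_mono) auto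
    then have ca: "cc n ^2 < aa n" using low by linarith
    have "sqrt (real n / (2 * pi)) * cc n = sqrt (real n/(2*pi) * cc n^2)"
      by (simp only: real_sqrt_mult real_sqrt_abs abs_of_pos[OF c0])
    also have "\<dots> < sqrt (real n/(2*pi) * aa n)"
      using ca x by (intro real_sqrt_less_mono mult_strict_left_mono) auto
    finally show ?thesis using rr by simp
  qed
next
  fix n :: nat assume n: "1 \<le> n"
  have up: "aa n < ff n ^2" by (rule chain_upper[OF n aa_step aa_ge1 aa_le ff_pos ff_ch ff_lim])
  have x: "real n / (2*pi) > 0" using n by simp
  have rr: "Omega (n-1)/Omega n = sqrt (real n/(2*pi) * aa n)"
    using r_sq[OF n] r_pos[OF n] by (metis abs_of_pos real_sqrt_abs)
  have f0: "ff n > 0" using ff_pos[OF n] .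
  have "sqrt (real n/(2*pi) * aa n) < sqrt (real n/(2*pi) * ff n^2)"
    using up x by (intro real_sqrt_less_mono mult_strict_left_mono) auto
  also have "\<dots> = sqrt (real n / (2 * pi)) * ff n"
    by (simp only: real_sqrt_mult real_sqrt_abs abs_of_pos[OF f0])
  finally show "Omega (n - 1) / Omega n < sqrt (real n / (2 * pi)) * dd n"
    using rr dd_ff[OF n] by simp
qed

end
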